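(* Let $R$ be an integral domain and $Q$ a quandle. Then: (1) The extended quandle ring $R^{\circ}[Q]$ contains zero-divisors. (2) If $Q$ contains a trivial subquandle with more than one element, then $R[Q]$ contains zero-divisors. (3) If $Q$ is inert, then $R[Q]$ contains zero-divisors. In particular, if $Q$ contains a finite subquandle with more than one element, then $R[Q]$ contains zero-divisors. (4) If $Q$ is not semi-latin, then $R[Q]$ contains zero-divisors.
   Context: A quandle is a non-empty set $Q$ with a binary operation $(x,y)\mapsto xy$ such that $xx=x$ for all $x$; for all $x,y$ there is a unique $z$ with $x=zy$; and $(xy)z=(xz)(yz)$ for all $x,y,z$. A subquandle is a subset closed under the operation which is a quandle with it. A quandle is trivial if $xy=x$ for all $x,y$. The quandle ring $R[Q]$ is the free $R$-module with basis $Q$, with multiplication $\big(\sum_i\alpha_i x_i\big)\big(\sum_j\beta_j x_j\big)=\sum_{i,j}\alpha_i\beta_j (x_ix_j)$ (in general non-associative). The extended quandle ring is $R^{\circ}[Q]=R[Q]\oplus Re$, where $e$ is a symbol not in $Q$ acting as a two-sided identity: $eu=u=ue$ for $u\in R[Q]$ and $ee=e$. A zero-divisor in a ring is a non-zero element $u$ for which there exists a non-zero $v$ with $uv=0$ or $vu=0$. A quandle $Q$ with more than one element is inert if there exist a finite subset $A=\{a_1,\dots,a_n\}\subseteq Q$ and two distinct elements $x,y\in Q$ such that $Ax=Ay$, where $Az=\{a_1z,\dots,a_nz\}$. A quandle is semi-latin if for each $x\in Q$ the map $L_x:Q\to Q$, $L_x(y)=xy$, is injective. *)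

theory Defs
  imports Main
begin

definition quandle :: "'a set \<Rightarrow> ('a \<Rightarrow> 'a \<Rightarrow> 'a) \<Rightarrow> bool" where
  "quandle Q op \<longleftrightarrow> Q \<noteq> {}
     \<and> (\<forall>x\<in>Q. \<forall>y\<in>Q. op x y \<in> Q)
     \<and> (\<forall>x\<in>Q. op x x = x)
     \<and> (\<forall>x\<in>Q. \<forall>y\<in>Q. \<exists>!z. z \<in> Q \<and> x = op z y)
     \<and> (\<forall>x\<in>Q. \<forall>y\<in>Q. \<forall>z\<in>Q. op (op x y) z = op (op x z) (op y z))"

definition subquandle :: "'a set \<Rightarrow> 'a set \<Rightarrow> ('a \<Rightarrow> 'a \<Rightarrow> 'a) \<Rightarrow> bool" where
  "subquandle S Q op \<longleftrightarrow> S \<subseteq> Q \<and> quandle S op"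

definition trivial_quandle :: "'a set \<Rightarrow> ('a \<Rightarrow> 'a \<Rightarrow> 'a) \<Rightarrow> bool" where
  "trivial_quandle S op \<longleftrightarrow> (\<forall>x\<in>S. \<forall>y\<in>S. op x y = x)"

definition inert :: "'a set \<Rightarrow> ('a \<Rightarrow> 'a \<Rightarrow> 'a) \<Rightarrow> bool" where
  "inert Q op \<longleftrightarrow> (\<exists>x\<in>Q. \<exists>y\<in>Q. x \<noteq> y)
     \<and> (\<exists>A x y. finite A \<and> A \<noteq> {} \<and> A \<subseteq> Q \<and> x \<in> Q \<and> y \<in> Q \<and> x \<noteq> y
            \<and> (\<lambda>a. op a x) ` A = (\<lambda>a. op a y) ` A)"

definition semi_latin :: "'a set \<Rightarrow> ('a \<Rightarrow> 'a \<Rightarrow> 'a) \<Rightarrow> bool" where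
  "semi_latin Q op \<longleftrightarrow> (\<forall>x\<in>Q. inj_on (op x) Q)"

definition qr_elems :: "'a set \<Rightarrow> ('a \<Rightarrow> 'r::zero) set" where
  "qr_elems Q = {u. finite {x. u x \<noteq> 0} \<and> (\<forall>x. u x \<noteq> 0 \<longrightarrow> x \<in> Q)}"

definition qr_mult :: "('a \<Rightarrow> 'a \<Rightarrow> 'a) \<Rightarrow> ('a \<Rightarrow> 'r::comm_ring_1) \<Rightarrow> ('a \<Rightarrow> 'r) \<Rightarrow> ('a \<Rightarrow> 'r)" where
  "qr_mult op u v = (\<lambda>z. \<Sum>p\<in>{(x, y). u x \<noteq> 0 \<and> v y \<noteq> 0 \<and> op x y = z}. u (fst p) * v (snd p))"

definition qr_zero_divisor :: "'a set \<Rightarrow> ('a \<Rightarrow> 'a \<Rightarrow> 'a) \<Rightarrow> ('a \<Rightarrow> 'r::comm_ring_1) \<Rightarrow> bool" where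
  "qr_zero_divisor Q op u \<longleftrightarrow> u \<in> qr_elems Q \<and> u \<noteq> (\<lambda>_. 0)
     \<and> (\<exists>v \<in> qr_elems Q. v \<noteq> (\<lambda>_. 0) \<and> (qr_mult op u v = (\<lambda>_. 0) \<or> qr_mult op v u = (\<lambda>_. 0)))"

text \<open>Extended quandle ring R[Q] \<oplus> R e: pairs (u, c) standing for u + c e.\<close>
definition eqr_elems :: "'a set \<Rightarrow> (('a \<Rightarrow> 'r::zero) \<times> 'r) set" where
  "eqr_elems Q = qr_elems Q \<times> UNIV"

definition eqr_mult :: "('a \<Rightarrow> 'a \<Rightarrow> 'a) \<Rightarrow> ('a \<Rightarrow> 'r::comm_ring_1) \<times> 'r \<Rightarrow> ('a \<Rightarrow> 'r) \<times> 'r \<Rightarrow> ('a \<Rightarrow> 'r) \<times> 'r" where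
  "eqr_mult op p q = (case p of (u, c) \<Rightarrow> case q of (v, d) \<Rightarrow>
     (\<lambda>z. qr_mult op u v z + c * v z + d * u z, c * d))"

definition eqr_zero_divisor :: "'a set \<Rightarrow> ('a \<Rightarrow> 'a \<Rightarrow> 'a) \<Rightarrow> ('a \<Rightarrow> 'r::comm_ring_1) \<times> 'r \<Rightarrow> bool" where
  "eqr_zero_divisor Q op p \<longleftrightarrow> p \<in> eqr_elems Q \<and> p \<noteq> (\<lambda>_. 0, 0)
     \<and> (\<exists>q \<in> eqr_elems Q. q \<noteq> (\<lambda>_. 0, 0) \<and> (eqr_mult op p q = (\<lambda>_. 0, 0) \<or> eqr_mult op q p = (\<lambda>_. 0, 0)))"

end

theory Submission
  imports Defs
begin

lemma qparts:
  assumes "quandle Q op"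
  shows "Q \<noteq> {}" "\<forall>x\<in>Q. \<forall>y\<in>Q. op x y \<in> Q" "\<forall>x\<in>Q. op x x = x"
     "\<forall>x\<in>Q. \<forall>y\<in>Q. \<exists>!z. z \<in> Q \<and> x = op z y"
  using assms unfolding quandle_def by simp_all

lemma qclosed: "quandle Q op \<Longrightarrow> x \<in> Q \<Longrightarrow> y \<in> Q \<Longrightarrow> op x y \<in> Q"
  using qparts(2) by blast

lemma qidem: "quandle Q op \<Longrightarrow> x \<in> Q \<Longrightarrow> op x x = x"
  using qparts(3) by blast

lemma qnonempty: "quandle Q op \<Longrightarrow> Q \<noteq> {}"
  using qparts(1) by blast

lemma qdiv: "quandle Q op \<Longrightarrow> x \<in> Q \<Longrightarrow> y \<in> Q \<Longrightarrow> \<exists>!z. z \<in> Q \<and> x = op z y"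
  using qparts(4) by blast

lemma rinj:
  assumes "quandle Q op" "a \<in> Q" "b \<in> Q" "x \<in> Q" "op a x = op b x"
  shows "a = b"
proof -
  have "op a x \<in> Q" by (rule qclosed[OF assms(1,2,4)])
  then have "\<exists>!z. z \<in> Q \<and> op a x = op z x" by (rule qdiv[OF assms(1) _ assms(4)])
  moreover have "a \<in> Q \<and> op a x = op a x" "b \<in> Q \<and> op a x = op b x" using assms by auto
  ultimately show ?thesis by blast
qed

lemma card_fib:
  assumes "quandle Q op" "A \<subseteq> Q" "x \<in> Q"
  shows "card {a\<in>A. op a x = z} = (if z \<in> (\<lambda>a. op a x) ` A then 1 else 0)"
proof (cases "z \<in> (\<lambda>a. op a x) ` A")
  case True
  then obtain a0 where a0: "a0 \<in> A" "z = op a0 x" by blast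
  have "{a\<in>A. op a x = z} = {a0}"
  proof (intro equalityI subsetI)
    fix a assume "a \<in> {a\<in>A. op a x = z}"
    then have "a \<in> Q" "op a x = op a0 x" using a0 assms(2) by auto
    then have "a = a0" using rinj[OF assms(1) _ _ assms(3), of a a0] a0 assms(2) by blast
    then show "a \<in> {a0}" by simp
  qed (use a0 in auto)
  then show ?thesis using True by simp
next
  case False
  then have e: "{a\<in>A. op a x = z} = {}" by blast
  show ?thesis unfolding e using False by simp
qed

lemma inertI:
  assumes "finite A" "A \<noteq> {}" "A \<subseteq> Q" "x \<in> Q" "y \<in> Q" "x \<noteq> y"
    "(\<lambda>a. op a x) ` A = (\<lambda>a. op a y) ` A"
  shows "inert Q op"
  unfolding inert_def using assms by blast

lemma inert_zd:
  assumes q: "quandle Q op" and i: "inert Q op"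
  shows "\<exists>u :: 'a \<Rightarrow> 'r::idom. qr_zero_divisor Q op u"
proof -
  obtain A x y where A: "finite A" "A \<noteq> {}" "A \<subseteq> Q" "x \<in> Q" "y \<in> Q" "x \<noteq> y"
    "(\<lambda>a. op a x) ` A = (\<lambda>a. op a y) ` A"
    using i unfolding inert_def by blast
  define u :: "'a \<Rightarrow> 'r" where "u = (\<lambda>z. if z \<in> A then 1 else 0)"
  define v :: "'a \<Rightarrow> 'r" where "v = (\<lambda>z. if z = x then 1 else if z = y then -1 else 0)"
  have u0: "u a \<noteq> 0 \<longleftrightarrow> a \<in> A" for a unfolding u_def by simp
  have v0: "v w \<noteq> 0 \<longleftrightarrow> w = x \<or> w = y" for w unfolding v_def by simp
  have uin: "u \<in> qr_elems Q"
    unfolding qr_elems_def using u0 A by (auto intro: finite_subset[of _ A])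
  have vin: "v \<in> qr_elems Q"
    unfolding qr_elems_def using v0 A by (auto intro: finite_subset[of _ "{x,y}"])
  have un: "u \<noteq> (\<lambda>_. 0)" using u0 A(2) by (metis all_not_in_conv)
  have vn: "v \<noteq> (\<lambda>_. 0)" using v0 by metis
  have "qr_mult op u v z = 0" for z
  proof -
    let ?P = "{(a, w). u a \<noteq> 0 \<and> v w \<noteq> 0 \<and> op a w = z}"
    let ?Bx = "{a\<in>A. op a x = z}"
    let ?By = "{a\<in>A. op a y = z}"
    have P: "?P = (\<lambda>a. (a, x)) ` ?Bx \<union> (\<lambda>a. (a, y)) ` ?By"
      using u0 v0 by auto
    have fx: "finite ?Bx" "finite ?By" using A(1) by auto
    have "qr_mult op u v z = (\<Sum>p\<in>(\<lambda>a. (a, x)) ` ?Bx \<union> (\<lambda>a. (a, y)) ` ?By. u (fst p) * v (snd p))"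
      unfolding qr_mult_def P by simp
    also have "\<dots> = (\<Sum>p\<in>(\<lambda>a. (a, x)) ` ?Bx. u (fst p) * v (snd p)) + (\<Sum>p\<in>(\<lambda>a. (a, y)) ` ?By. u (fst p) * v (snd p))"
      by (rule sum.union_disjoint) (use fx A(6) in auto)
    also have "(\<Sum>p\<in>(\<lambda>a. (a, x)) ` ?Bx. u (fst p) * v (snd p)) = (\<Sum>a\<in>?Bx. u a * v x)"
      by (subst sum.reindex) (auto simp: inj_on_def)
    also have "\<dots> = of_nat (card ?Bx)" unfolding u_def v_def by simp
    also have "(\<Sum>p\<in>(\<lambda>a. (a, y)) ` ?By. u (fst p) * v (snd p)) = (\<Sum>a\<in>?By. u a * v y)"
      by (subst sum.reindex) (auto simp: inj_on_def)
    also have "\<dots> = - of_nat (card ?By)" using A(6) unfolding u_def v_def by (simp add: sum_negf)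
    also have "card ?Bx = card ?By"
      using card_fib[OF q A(3) A(4)] card_fib[OF q A(3) A(5)] A(7) by simp
    finally show ?thesis by simp
  qed
  then have "qr_mult op u v = (\<lambda>_. 0)" by auto
  then show ?thesis unfolding qr_zero_divisor_def using uin vin un vn by blast
qed

lemma ext_zd:
  assumes q: "quandle Q op"
  shows "\<exists>p :: ('a \<Rightarrow> 'r::idom) \<times> 'r. eqr_zero_divisor Q op p"
proof -
  obtain x where x: "x \<in> Q" using qnonempty[OF q] by blast
  have xx: "op x x = x" using qidem[OF q x] .
  define d :: "'a \<Rightarrow> 'r" where "d = (\<lambda>z. if z = x then 1 else 0)"
  have din: "d \<in> qr_elems Q" unfolding qr_elems_def d_def using x by auto
  have dn: "d \<noteq> (\<lambda>_. 0)" unfolding d_def by (metis one_neq_zero)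
  have "qr_mult op d d z = d z" for z
  proof -
    have "{(a, b). d a \<noteq> 0 \<and> d b \<noteq> 0 \<and> op a b = z} = (if z = x then {(x, x)} else {})"
      unfolding d_def using xx by auto
    then show ?thesis unfolding qr_mult_def d_def by simp
  qed
  then have "eqr_mult op (d, -1) (d, 0) = (\<lambda>_. 0, 0)"
    unfolding eqr_mult_def by auto
  moreover have "(d, -1) \<in> eqr_elems Q" "(d, 0) \<in> eqr_elems Q"
    unfolding eqr_elems_def using din by auto
  ultimately have "eqr_zero_divisor Q op (d, -1)"
    unfolding eqr_zero_divisor_def using dn by auto
  then show ?thesis by blast
qed

theorem proposition3p1:
  fixes Q :: "'a set" and op :: "'a \<Rightarrow> 'a \<Rightarrow> 'a"
  assumes "quandle Q op"
  shows "(\<exists>p :: ('a \<Rightarrow> 'r::idom) \<times> 'r. eqr_zero_divisor Q op p)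
    \<and> ((\<exists>S. subquandle S Q op \<and> trivial_quandle S op \<and> (\<exists>x\<in>S. \<exists>y\<in>S. x \<noteq> y))
         \<longrightarrow> (\<exists>u :: 'a \<Rightarrow> 'r. qr_zero_divisor Q op u))
    \<and> (inert Q op \<longrightarrow> (\<exists>u :: 'a \<Rightarrow> 'r. qr_zero_divisor Q op u))
    \<and> ((\<exists>S. subquandle S Q op \<and> finite S \<and> (\<exists>x\<in>S. \<exists>y\<in>S. x \<noteq> y))
         \<longrightarrow> (\<exists>u :: 'a \<Rightarrow> 'r. qr_zero_divisor Q op u))
    \<and> (\<not> semi_latin Q op \<longrightarrow> (\<exists>u :: 'a \<Rightarrow> 'r. qr_zero_divisor Q op u))"
proof (intro conjI impI)
  show "\<exists>p :: ('a \<Rightarrow> 'r::idom) \<times> 'r. eqr_zero_divisor Q op p" by (rule ext_zd[OF assms])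
  show "inert Q op \<Longrightarrow> \<exists>u :: 'a \<Rightarrow> 'r. qr_zero_divisor Q op u" by (rule inert_zd[OF assms])
next
  assume "\<exists>S. subquandle S Q op \<and> trivial_quandle S op \<and> (\<exists>x\<in>S. \<exists>y\<in>S. x \<noteq> y)"
  then obtain S x y where S: "S \<subseteq> Q" "trivial_quandle S op" "x \<in> S" "y \<in> S" "x \<noteq> y"
    unfolding subquandle_def by (elim exE conjE bexE) blast
  have "(\<lambda>a. op a x) ` {x, y} = {x, y}" "(\<lambda>a. op a y) ` {x, y} = {x, y}"
    using S(2-4) unfolding trivial_quandle_def by auto
  then have "inert Q op" using S by (intro inertI[of "{x,y}" Q x y op]) auto
  then show "\<exists>u :: 'a \<Rightarrow> 'r. qr_zero_divisor Q op u" by (rule inert_zd[OF assms])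
next
  assume "\<exists>S. subquandle S Q op \<and> finite S \<and> (\<exists>x\<in>S. \<exists>y\<in>S. x \<noteq> y)"
  then obtain S x y where S: "S \<subseteq> Q" "quandle S op" "finite S" "x \<in> S" "y \<in> S" "x \<noteq> y"
    unfolding subquandle_def by (elim exE conjE bexE) blast
  have im: "(\<lambda>a. op a w) ` S = S" if "w \<in> S" for w
  proof
    show "(\<lambda>a. op a w) ` S \<subseteq> S" using qclosed[OF S(2) _ that] by auto
    show "S \<subseteq> (\<lambda>a. op a w) ` S"
    proof
      fix t assume "t \<in> S"
      then have "\<exists>!z. z \<in> S \<and> t = op z w" by (rule qdiv[OF S(2) _ that])
      then show "t \<in> (\<lambda>a. op a w) ` S" by blast
    qed
  qed
  have "inert Q op" using S im[OF S(4)] im[OF S(5)] by (intro inertI[of S Q x y op]) auto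
  then show "\<exists>u :: 'a \<Rightarrow> 'r. qr_zero_divisor Q op u" by (rule inert_zd[OF assms])
next
  assume "\<not> semi_latin Q op"
  then obtain x y z where S: "x \<in> Q" "y \<in> Q" "z \<in> Q" "y \<noteq> z" "op x y = op x z"
    unfolding semi_latin_def inj_on_def by blast
  have "inert Q op" using S by (intro inertI[of "{x}" Q y z op]) auto
  then show "\<exists>u :: 'a \<Rightarrow> 'r. qr_zero_divisor Q op u" by (rule inert_zd[OF assms])
qed

end
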